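(* Let $q\ge1$, $(a,q)=1$, $X\ge2$ and $1\le h\le X$. Then $$J_{2,a,q}(X,h):=\int_0^\infty\Big|\sum_{x<n\le x+h}F(n)e^{-n/X}\Big|^2dx\ll\frac{h^2}{X^2}\sum_{j=1}^\infty\frac{1}{2^{j-1}}\Big(H_{a,q}(jX)+\frac{jX}{\varphi^2(q)}\Big)+\sum_{j=1}^\infty\frac{1}{2^{j-1}}\Big(K_{a,q}(jX,h)+\frac{jX}{\varphi^2(q)}\Big),$$ where $F(n)=\Lambda(n)\delta(n)-\frac{1}{\varphi(q)}+\frac{\widetilde\chi(a)}{\varphi(q)}n^{\widetilde\beta-1}$, $H_{a,q}(y)=\int_0^y\Big(\psi(t,q,a)-\frac{t}{\varphi(q)}+\frac{\widetilde\chi(a)}{\varphi(q)}\frac{t^{\widetilde\beta}}{\widetilde\beta}\Big)^2dt$ and $K_{a,q}(y,h)=\int_0^y\Big(\psi(t+h,q,a)-\psi(t,q,a)-\frac{h}{\varphi(q)}+\frac{\widetilde\chi(a)}{\varphi(q)}\frac{(t+h)^{\widetilde\beta}-t^{\widetilde\beta}}{\widetilde\beta}\Big)^2dt$.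
   Context: $\Lambda$ is the von Mangoldt function, $\varphi$ Euler's totient, $\delta(n)=1$ if $n\equiv a\pmod q$ and $0$ otherwise, $\psi(t,q,a)=\sum_{m\le t,\ m\equiv a (q)}\Lambda(m)$. $\widetilde\beta$ is the possible Siegel (exceptional) zero for modulus $q$, a real zero of $L(s,\widetilde\chi)$ for the exceptional real character $\widetilde\chi$ mod $q$ (at most one exists; if none, the terms involving $\widetilde\beta$ are absent). *)

theory Defs
  imports "HOL-Analysis.Analysis" "HOL-Number_Theory.Number_Theory"
begin

definition psi :: "real \<Rightarrow> nat \<Rightarrow> nat \<Rightarrow> real" where
  "psi t q a = (\<Sum>m \<in> {m. 1 \<le> m \<and> real m \<le> t \<and> [m = a] (mod q)}. mangoldt m)"

definition delta :: "nat \<Rightarrow> nat \<Rightarrow> nat \<Rightarrow> real" where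
  "delta q a n = (if [n = a] (mod q) then 1 else 0)"

definition real_dirichlet_char :: "nat \<Rightarrow> (nat \<Rightarrow> int) \<Rightarrow> bool" where
  "real_dirichlet_char q chi \<longleftrightarrow>
     q \<ge> 1 \<and> chi 1 = 1 \<and>
     (\<forall>m n. chi (m * n) = chi m * chi n) \<and>
     (\<forall>n. chi (n + q) = chi n) \<and>
     (\<forall>n. chi n \<noteq> 0 \<longleftrightarrow> coprime n q) \<and>
     (\<forall>n. chi n \<in> {-1, 0, 1})"

definition nonprincipal :: "nat \<Rightarrow> (nat \<Rightarrow> int) \<Rightarrow> bool" where
  "nonprincipal q chi \<longleftrightarrow> (\<exists>n. coprime n q \<and> chi n \<noteq> 1)"

(* L(s,chi) = sum_{n>=1} chi(n) n^{-s} vanishes (series converges for real s > 0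
   when chi is nonprincipal) *)
definition L_zero :: "(nat \<Rightarrow> int) \<Rightarrow> real \<Rightarrow> bool" where
  "L_zero chi s \<longleftrightarrow> (\<lambda>n. real_of_int (chi (Suc n)) / real (Suc n) powr s) sums 0"

(* Exceptional (Siegel) zero for modulus q, relative to the zero-free-region constant c0:
   a real zero beta > 1 - c0 / log q of L(s,chi) for a real nonprincipal character chi mod q *)
definition exceptional_zero :: "real \<Rightarrow> nat \<Rightarrow> (nat \<Rightarrow> int) \<Rightarrow> real \<Rightarrow> bool" where
  "exceptional_zero c0 q chi \<beta> \<longleftrightarrow>
     real_dirichlet_char q chi \<and> nonprincipal q chi \<and>
     1 - c0 / ln (real q) < \<beta> \<and> \<beta> < 1 \<and> L_zero chi \<beta>"

(* In the following, c stands for chi~(a) and be for beta~; the case without an exceptional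
   zero is c = 0 (then all terms involving beta~ vanish). *)

definition F :: "nat \<Rightarrow> nat \<Rightarrow> real \<Rightarrow> real \<Rightarrow> nat \<Rightarrow> real" where
  "F q a c be n = mangoldt n * delta q a n - 1 / real (totient q)
      + c / real (totient q) * real n powr (be - 1)"

definition J :: "nat \<Rightarrow> nat \<Rightarrow> real \<Rightarrow> real \<Rightarrow> real \<Rightarrow> real \<Rightarrow> ennreal" where
  "J q a c be X h = (\<integral>\<^sup>+ x \<in> {0..}.
      ennreal ((\<bar>\<Sum>n \<in> {n. x < real n \<and> real n \<le> x + h}. F q a c be n * exp (- real n / X)\<bar>)\<^sup>2)
      \<partial>lborel)"

definition H :: "nat \<Rightarrow> nat \<Rightarrow> real \<Rightarrow> real \<Rightarrow> real \<Rightarrow> ennreal" where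
  "H q a c be y = (\<integral>\<^sup>+ t \<in> {0..y}.
      ennreal ((psi t q a - t / real (totient q) + c / real (totient q) * (t powr be / be))\<^sup>2)
      \<partial>lborel)"

definition K :: "nat \<Rightarrow> nat \<Rightarrow> real \<Rightarrow> real \<Rightarrow> real \<Rightarrow> real \<Rightarrow> ennreal" where
  "K q a c be y h = (\<integral>\<^sup>+ t \<in> {0..y}.
      ennreal ((psi (t + h) q a - psi t q a - h / real (totient q)
         + c / real (totient q) * (((t + h) powr be - t powr be) / be))\<^sup>2)
      \<partial>lborel)"

definition RHS :: "nat \<Rightarrow> nat \<Rightarrow> real \<Rightarrow> real \<Rightarrow> real \<Rightarrow> real \<Rightarrow> ennreal" where
  "RHS q a c be X h =
     ennreal (h\<^sup>2 / X\<^sup>2) *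
       (\<Sum>j. ennreal (1 / 2 ^ j) * (H q a c be (real (Suc j) * X)
                                   + ennreal (real (Suc j) * X / (real (totient q))\<^sup>2)))
   + (\<Sum>j. ennreal (1 / 2 ^ j) * (K q a c be (real (Suc j) * X) h
                                   + ennreal (real (Suc j) * X / (real (totient q))\<^sup>2)))"

end

theory Submission
  imports Defs
begin


lemma tangent_powr:
  fixes x y be :: real
  assumes "x > 0" "y \<ge> 0" "0 \<le> be" "be \<le> 1"
  shows "y powr be \<le> x powr be + be * x powr (be - 1) * (y - x)"
proof (cases "y = 0")
  case True
  have "x powr be = x * x powr (be - 1)" using assms(1)
    by (simp add: powr_diff)
  then have "be * x powr (be - 1) * (y - x) = - be * x powr be" using True by simp
  then have "x powr be + be * x powr (be - 1) * (y - x) = (1 - be) * x powr be"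
    by (simp add: algebra_simps)
  moreover have "0 \<le> (1 - be) * x powr be" using assms by simp
  ultimately show ?thesis using True by simp
next
  case False
  then have yp: "y > 0" using assms by auto
  have "(y/x) powr be * 1 powr (1 - be) \<le> be * (y/x) + (1 - be) * 1"
    by (rule Youngs_inequality_0) (use assms yp in auto)
  then have "(y/x) powr be \<le> be * (y/x) + (1 - be)" by simp
  then have "x powr be * (y/x) powr be \<le> x powr be * (be * (y/x) + (1 - be))"
    by (simp add: mult_left_mono)
  moreover have "x powr be * (y/x) powr be = y powr be"
    using assms yp by (simp add: powr_divide)
  moreover have "x powr be * (be * (y/x) + (1 - be)) = x powr be + be * x powr (be - 1) * (y - x)"
  proof -
    define z where "z = x powr (be - 1)"
    have xz: "x powr be = x * z" unfolding z_def using assms(1)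
      by (simp add: powr_diff)
    show ?thesis unfolding xz z_def[symmetric] using assms(1)
      by (simp add: field_simps)
  qed
  ultimately show ?thesis by simp
qed

definition eS :: "real \<Rightarrow> nat \<Rightarrow> real" where
  "eS be N = (\<Sum>n\<in>{1..N}. real n powr (be - 1)) - real N powr be / be"

lemma eS_Suc: "eS be (Suc N) = eS be N + real (Suc N) powr (be - 1)
     - (real (Suc N) powr be - real N powr be) / be"
  unfolding eS_def by (simp add: diff_divide_distrib)

lemma eS_le0:
  assumes "0 < be" "be \<le> 1"
  shows "eS be N \<le> 0"
proof (induction N)
  case 0 then show ?case by (simp add: eS_def)
next
  case (Suc N)
  have "real N powr be \<le> real (Suc N) powr be + be * real (Suc N) powr (be - 1) * (real N - real (Suc N))"
    by (rule tangent_powr) (use assms in auto)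
  then have "be * real (Suc N) powr (be - 1) \<le> real (Suc N) powr be - real N powr be"
    by simp
  then have "real (Suc N) powr (be - 1) \<le> (real (Suc N) powr be - real N powr be) / be"
    using assms by (simp add: field_simps)
  then show ?case using Suc eS_Suc[of be N] by linarith
qed

lemma eS_ge_Suc:
  assumes "0 < be" "be \<le> 1"
  shows "eS be (Suc N) \<ge> real (Suc N) powr (be - 1) - 1 / be"
proof (induction N)
  case 0 then show ?case by (simp add: eS_def)
next
  case (Suc N)
  have "real (Suc (Suc N)) powr be \<le> real (Suc N) powr be + be * real (Suc N) powr (be - 1) * (real (Suc (Suc N)) - real (Suc N))"
    by (rule tangent_powr) (use assms in auto)
  then have "(real (Suc (Suc N)) powr be - real (Suc N) powr be) / be \<le> real (Suc N) powr (be - 1)"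
    using assms by (simp add: field_simps)
  then show ?case using Suc eS_Suc[of be "Suc N"] by linarith
qed

lemma eS_ge:
  assumes "0 < be" "be \<le> 1"
  shows "eS be N \<ge> - 1 / be"
proof (cases N)
  case 0 then show ?thesis using assms by (simp add: eS_def)
next
  case (Suc M)
  have "0 \<le> real (Suc M) powr (be - 1)" by simp
  then show ?thesis unfolding Suc using eS_ge_Suc[OF assms, of M] by linarith
qed

lemma powr_step_le1:
  fixes t be :: real
  assumes "0 \<le> t" "0 < be" "be \<le> 1"
  shows "t powr be - real (nat \<lfloor>t\<rfloor>) powr be \<le> 1"
    and "0 \<le> t powr be - real (nat \<lfloor>t\<rfloor>) powr be"
proof -
  define N where "N = nat \<lfloor>t\<rfloor>"
  have N1: "real N \<le> t" "t < real N + 1" unfolding N_def using assms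
    by linarith+
  show "0 \<le> t powr be - real (nat \<lfloor>t\<rfloor>) powr be"
    using N1 assms unfolding N_def[symmetric] by (simp add: powr_mono2)
  show "t powr be - real (nat \<lfloor>t\<rfloor>) powr be \<le> 1"
  proof (cases "N = 0")
    case True
    then have "t powr be \<le> 1 powr be" using N1 assms by (intro powr_mono2) auto
    then have "t powr be \<le> 1" by simp
    then show ?thesis using True unfolding N_def[symmetric] by simp
  next
    case False
    then have Np: "real N \<ge> 1" by simp
    have "t powr be \<le> real N powr be + be * real N powr (be - 1) * (t - real N)"
      by (rule tangent_powr) (use assms Np in auto)
    moreover have "real N powr (be - 1) \<le> 1 powr (be - 1)" using Np assms
      by (intro powr_mono2') auto
    moreover have "real N powr (be - 1) \<le> 1" using calculation(2) by simp
    moreover have "be * real N powr (be - 1) * (t - real N) \<le> 1 * 1 * 1"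
      using calculation(3) N1 assms
      by (intro mult_mono) auto
    ultimately show ?thesis unfolding N_def[symmetric] by linarith
  qed
qed



definition ps :: "nat \<Rightarrow> nat \<Rightarrow> nat \<Rightarrow> real" where
  "ps q a m = (\<Sum>n\<in>{1..m}. mangoldt n * delta q a n)"

definition sF :: "nat \<Rightarrow> nat \<Rightarrow> real \<Rightarrow> real \<Rightarrow> nat \<Rightarrow> real" where
  "sF q a c be m = (\<Sum>n\<in>{1..m}. F q a c be n)"

lemma real_le_iff_nat_floor:
  assumes "1 \<le> m" shows "real m \<le> t \<longleftrightarrow> m \<le> nat \<lfloor>t\<rfloor>"
proof -
  have "real m \<le> t \<longleftrightarrow> int m \<le> \<lfloor>t\<rfloor>" by (simp add: le_floor_iff)
  also have "\<dots> \<longleftrightarrow> m \<le> nat \<lfloor>t\<rfloor>" using assms by linarith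
  finally show ?thesis .
qed

lemma psi_eq: "psi t q a = ps q a (nat \<lfloor>t\<rfloor>)"
proof -
  have seteq: "{m. 1 \<le> m \<and> real m \<le> t \<and> [m = a] (mod q)} = {m\<in>{1..nat \<lfloor>t\<rfloor>}. [m = a] (mod q)}"
    using real_le_iff_nat_floor by auto
  have "psi t q a = sum mangoldt {m\<in>{1..nat \<lfloor>t\<rfloor>}. [m = a] (mod q)}"
    by (simp only: psi_def seteq)
  also have "\<dots> = (\<Sum>n\<in>{1..nat \<lfloor>t\<rfloor>}. if [n = a] (mod q) then mangoldt n else 0)"
    by (rule sum.inter_filter) simp
  also have "\<dots> = ps q a (nat \<lfloor>t\<rfloor>)" unfolding ps_def delta_def
    by (intro sum.cong) auto
  finally show ?thesis .
qed

lemma sF_eq: "sF q a c be m = ps q a m - real m / real (totient q)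
   + c / real (totient q) * (\<Sum>n\<in>{1..m}. real n powr (be - 1))"
  unfolding sF_def ps_def F_def
  by (simp add: sum.distrib sum_subtractf sum_distrib_left)

lemma D_bound:
  assumes "0 \<le> t" "q \<ge> 1" "0 < be" "be \<le> 1" "\<bar>c\<bar> \<le> 1"
  shows "\<bar>sF q a c be (nat \<lfloor>t\<rfloor>) - (psi t q a - t / real (totient q)
            + c / real (totient q) * (t powr be / be))\<bar> \<le> (1 + 2 / be) / real (totient q)"
proof -
  define N where "N = nat \<lfloor>t\<rfloor>"
  define p where "p = real (totient q)"
  have p1: "p \<ge> 1" unfolding p_def using assms(2)
    by (simp add: Suc_le_eq totient_gt_0_iff)
  have N1: "real N \<le> t" "t < real N + 1" unfolding N_def using assms by linarith+
  define u where "u = eS be N - (t powr be - real N powr be) / be"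
  have e1: "eS be N \<le> 0" "eS be N \<ge> -1/be" using eS_le0 eS_ge assms by auto
  have st: "t powr be - real N powr be \<le> 1" "0 \<le> t powr be - real N powr be"
    using powr_step_le1[OF assms(1,3,4)] unfolding N_def by auto
  have "(t powr be - real N powr be) / be \<le> 1 / be"
    using st assms by (simp add: divide_right_mono)
  moreover have "0 \<le> (t powr be - real N powr be) / be" using st assms by simp
  ultimately have u: "\<bar>u\<bar> \<le> 2 / be" unfolding u_def using e1 by auto
  have eq: "sF q a c be N - (psi t q a - t / p + c / p * (t powr be / be))
       = (t - real N) / p + c / p * u"
    unfolding sF_eq psi_eq N_def[symmetric] p_def[symmetric] u_def eS_def
    using p1 assms(3) by (simp add: field_simps)
  have cp: "\<bar>c / p\<bar> \<le> 1 / p" using p1 assms(5)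
    by (simp add: abs_divide divide_right_mono)
  have "\<bar>c / p * u\<bar> \<le> 1 / p * (2 / be)"
    unfolding abs_mult by (rule mult_mono[OF cp u]) (use p1 in auto)
  moreover have "\<bar>(t - real N) / p\<bar> \<le> 1 / p" using N1 p1
    by (simp add: divide_right_mono)
  ultimately have "\<bar>(t - real N) / p + c / p * u\<bar> \<le> 1 / p + 1 / p * (2 / be)"
    using abs_triangle_ineq[of "(t - real N) / p" "c / p * u"] by linarith
  also have "1 / p + 1 / p * (2 / be) = (1 + 2 / be) / p" by (simp add: add_divide_distrib)
  finally have "\<bar>sF q a c be N - (psi t q a - t / p + c / p * (t powr be / be))\<bar> \<le> (1 + 2 / be) / p"
    unfolding eq .
  then show ?thesis unfolding N_def p_def .
qed



lemma sum_gtAtMost_Suc: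
  fixes g :: "nat \<Rightarrow> real"
  assumes "a \<le> b"
  shows "sum g {a<..Suc b} = g (Suc b) + sum g {a<..b}"
proof -
  have I: "{a<..Suc b} = insert (Suc b) {a<..b}" using assms by auto
  show ?thesis unfolding I by simp
qed

lemma abel_sum:
  fixes f w :: "nat \<Rightarrow> real"
  shows "(\<Sum>n\<in>{a<..b}. f n * (w n - w (Suc b))) =
         (\<Sum>m\<in>{a<..b}. (w m - w (Suc m)) * (\<Sum>n\<in>{a<..m}. f n))"
proof (induction b)
  case 0 then show ?case by simp
next
  case (Suc b)
  show ?case
  proof (cases "a \<le> b")
    case True
    have I: "{a<..Suc b} = insert (Suc b) {a<..b}" using True by auto
    have "(\<Sum>n\<in>{a<..b}. f n * (w n - w (Suc (Suc b)))) =
          (\<Sum>n\<in>{a<..b}. f n * (w n - w (Suc b)) + (w (Suc b) - w (Suc (Suc b))) * f n)"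
      by (intro sum.cong) (auto simp: algebra_simps)
    also have "\<dots> = (\<Sum>n\<in>{a<..b}. f n * (w n - w (Suc b))) + (w (Suc b) - w (Suc (Suc b))) * (\<Sum>n\<in>{a<..b}. f n)"
      by (simp add: sum.distrib sum_distrib_left)
    finally have e: "(\<Sum>n\<in>{a<..b}. f n * (w n - w (Suc (Suc b)))) =
       (\<Sum>n\<in>{a<..b}. f n * (w n - w (Suc b))) + (w (Suc b) - w (Suc (Suc b))) * (\<Sum>n\<in>{a<..b}. f n)" .
    have "(\<Sum>n\<in>{a<..Suc b}. f n * (w n - w (Suc (Suc b)))) =
        f (Suc b) * (w (Suc b) - w (Suc (Suc b))) + (\<Sum>n\<in>{a<..b}. f n * (w n - w (Suc (Suc b))))"
      by (rule sum_gtAtMost_Suc[OF True])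
    also have "\<dots> = (w (Suc b) - w (Suc (Suc b))) * (f (Suc b) + sum f {a<..b})
        + (\<Sum>m\<in>{a<..b}. (w m - w (Suc m)) * (\<Sum>n\<in>{a<..m}. f n))"
      using e Suc.IH by (simp add: algebra_simps)
    also have "f (Suc b) + sum f {a<..b} = sum f {a<..Suc b}"
      by (rule sum_gtAtMost_Suc[OF True, symmetric])
    also have "(w (Suc b) - w (Suc (Suc b))) * sum f {a<..Suc b}
        + (\<Sum>m\<in>{a<..b}. (w m - w (Suc m)) * (\<Sum>n\<in>{a<..m}. f n))
        = (\<Sum>m\<in>{a<..Suc b}. (w m - w (Suc m)) * (\<Sum>n\<in>{a<..m}. f n))"
      by (rule sum_gtAtMost_Suc[OF True, symmetric])
    finally show ?thesis .
  next
    case False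
    then have "{a<..Suc b} = {}" "{a<..b} = {}" by auto
    then show ?thesis by simp
  qed
qed

lemma sum_split_at:
  fixes f :: "nat \<Rightarrow> real"
  assumes "a \<le> m"
  shows "(\<Sum>n\<in>{a<..m}. f n) = (\<Sum>n\<in>{1..m}. f n) - (\<Sum>n\<in>{1..a}. f n)"
proof -
  have "{1..m} = {1..a} \<union> {a<..m}" using assms by auto
  moreover have "{1..a} \<inter> {a<..m} = {}" by auto
  ultimately have "(\<Sum>n\<in>{1..m}. f n) = (\<Sum>n\<in>{1..a}. f n) + (\<Sum>n\<in>{a<..m}. f n)"
    by (simp add: sum.union_disjoint)
  then show ?thesis by simp
qed

lemma weighted_CS:
  fixes d v :: "nat \<Rightarrow> real"
  assumes "\<And>m. m \<in> I \<Longrightarrow> 0 \<le> d m"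
  shows "(\<Sum>m\<in>I. d m * v m)\<^sup>2 \<le> (\<Sum>m\<in>I. d m) * (\<Sum>m\<in>I. d m * (v m)\<^sup>2)"
proof -
  have "(\<Sum>m\<in>I. sqrt (d m) * (sqrt (d m) * v m))\<^sup>2 \<le>
        (\<Sum>m\<in>I. (sqrt (d m))\<^sup>2) * (\<Sum>m\<in>I. (sqrt (d m) * v m)\<^sup>2)"
    by (rule Cauchy_Schwarz_ineq_sum)
  moreover have "(\<Sum>m\<in>I. sqrt (d m) * (sqrt (d m) * v m)) = (\<Sum>m\<in>I. d m * v m)"
    using assms by (intro sum.cong) (auto simp: mult.assoc[symmetric])
  moreover have "(\<Sum>m\<in>I. (sqrt (d m))\<^sup>2) = (\<Sum>m\<in>I. d m)"
    using assms by (intro sum.cong) auto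
  moreover have "(\<Sum>m\<in>I. (sqrt (d m) * v m)\<^sup>2) = (\<Sum>m\<in>I. d m * (v m)\<^sup>2)"
    using assms by (intro sum.cong) (auto simp: power_mult_distrib)
  ultimately show ?thesis by simp
qed

lemma sq_diff_le: fixes p q :: real shows "(p - q)\<^sup>2 \<le> 2 * p\<^sup>2 + 2 * q\<^sup>2"
proof -
  have "(p - q)\<^sup>2 = 2 * p\<^sup>2 + 2 * q\<^sup>2 - (p + q)\<^sup>2" by (simp add: power2_eq_square algebra_simps)
  moreover have "0 \<le> (p + q)\<^sup>2" by simp
  ultimately show ?thesis by linarith
qed

lemma sq_sum_le: fixes p q :: real shows "(p + q)\<^sup>2 \<le> 2 * p\<^sup>2 + 2 * q\<^sup>2"
  using sq_diff_le[of p "-q"] by simp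

lemma pointwise:
  fixes f :: "nat \<Rightarrow> real" and X h x :: real and a b :: nat
  defines "s \<equiv> \<lambda>m. \<Sum>n\<in>{1..m}. f n" and "W \<equiv> \<lambda>t::real. exp (- t / X)"
  assumes X: "X > 0" and h: "1 \<le> h" "h \<le> X" and x: "0 \<le> x"
    and ab: "real a \<le> x" "x < real a + 1" "real b \<le> x + h" "x + h < real b + 1"
  shows "(\<Sum>n\<in>{a<..b}. f n * W n)\<^sup>2 \<le> 2 * (W x)\<^sup>2 * (s b - s a)\<^sup>2
           + 16 * (h / X)\<^sup>2 * (W x)\<^sup>2 * (s a)\<^sup>2
           + 24 * h / X\<^sup>2 * (\<Sum>m\<in>{a<..b}. (W m)\<^sup>2 * (s m)\<^sup>2)"
proof -
  define I where "I = {a<..b}"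
  define d where "d m = W (real m) - W (real (Suc m))" for m :: nat
  define v where "v m = s m - s a" for m :: nat
  have Wpos: "W t > 0" for t unfolding W_def by simp
  have Wmono: "W t \<le> W u" if "u \<le> t" for t u unfolding W_def using that X
    by (simp add: divide_right_mono)
  have ab_le: "a \<le> b" using ab h by linarith
  have Im: "x < real m" "real m \<le> x + h" if "m \<in> I" for m
    using that ab unfolding I_def by auto
  have card: "real (card I) \<le> 2 * h" unfolding I_def using ab h by auto
  have sub: "(\<Sum>n\<in>{a<..m}. f n) = v m" if "m \<in> I" for m
    using that sum_split_at[of a m f] unfolding v_def s_def I_def by auto
  have "(\<Sum>n\<in>I. f n * (W n - W (Suc b))) = (\<Sum>n\<in>I. f n * W n) - W (Suc b) * (\<Sum>n\<in>I. f n)"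
    by (simp add: algebra_simps sum_subtractf sum_distrib_left sum_distrib_right)
  then have "(\<Sum>n\<in>I. f n * W n) = (\<Sum>n\<in>I. f n * (W n - W (Suc b))) + W (Suc b) * (\<Sum>n\<in>I. f n)"
    by linarith
  also have "(\<Sum>n\<in>I. f n * (W n - W (Suc b))) = (\<Sum>m\<in>I. d m * (\<Sum>n\<in>{a<..m}. f n))"
    unfolding I_def d_def using abel_sum[where a=a and b=b and f=f and w="\<lambda>n. W (real n)"] by simp
  also have "\<dots> = (\<Sum>m\<in>I. d m * v m)" using sub by (intro sum.cong) auto
  also have "(\<Sum>n\<in>I. f n) = s b - s a"
    using sum_split_at[OF ab_le, of f] unfolding s_def I_def by simp
  finally have A: "(\<Sum>n\<in>I. f n * W n) = (\<Sum>m\<in>I. d m * v m) + W (Suc b) * (s b - s a)" .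
  have d_nonneg: "0 \<le> d m" for m unfolding d_def by (rule diff_ge_0_iff_ge[THEN iffD2], rule Wmono) simp
  have d_le: "d m \<le> W m / X" for m
  proof -
    have "W (real (Suc m)) = W m * exp (- 1 / X)" unfolding W_def
      by (simp add: exp_add[symmetric] add_divide_distrib diff_divide_distrib)
    moreover have "1 + (- 1 / X) \<le> exp (- 1 / X)" by (rule exp_ge_add_one_self)
    ultimately have "d m = W m * (1 - exp (- 1 / X))" "1 - exp (- 1 / X) \<le> 1 / X"
      unfolding d_def by (simp_all add: algebra_simps)
    moreover have "W m * (1 - exp (- 1 / X)) \<le> W m * (1 / X)"
      using calculation(2) Wpos[of m] by (intro mult_left_mono) auto
    ultimately show ?thesis by simp
  qed
  have WxWm: "W x \<le> 3 * W m" if "m \<in> I" for m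
  proof -
    have "- x / X \<le> - real m / X + 1" using Im[OF that] h X
      by (simp add: field_simps)
    then have "W x \<le> exp (- real m / X + 1)" unfolding W_def by simp
    also have "\<dots> = W m * exp 1" unfolding W_def by (simp add: exp_add[symmetric])
    also have "\<dots> \<le> W m * 3" using exp_le Wpos[of m] by (intro mult_left_mono) auto
    finally show ?thesis by simp
  qed
  have WmWx: "W m \<le> W x" if "m \<in> I" for m using Im[OF that] Wmono by auto
  have CS: "(\<Sum>m\<in>I. d m * v m)\<^sup>2 \<le> (\<Sum>m\<in>I. d m) * (\<Sum>m\<in>I. d m * (v m)\<^sup>2)"
    by (rule weighted_CS) (use d_nonneg in auto)
  have sd: "(\<Sum>m\<in>I. d m) \<le> 2 * h * W x / X"
  proof -
    have "(\<Sum>m\<in>I. d m) \<le> (\<Sum>m\<in>I. W x / X)"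
      using d_le WmWx X by (intro sum_mono) (meson divide_right_mono order_trans less_imp_le)
    also have "\<dots> = real (card I) * (W x / X)" by simp
    also have "\<dots> \<le> (2 * h) * (W x / X)" using card Wpos[of x] X
      by (intro mult_right_mono) auto
    finally show ?thesis by simp
  qed
  have sdv: "(\<Sum>m\<in>I. d m * (v m)\<^sup>2) \<le> (\<Sum>m\<in>I. W m / X * (2 * (s m)\<^sup>2 + 2 * (s a)\<^sup>2))"
  proof (intro sum_mono)
    fix m assume "m \<in> I"
    have "(v m)\<^sup>2 \<le> 2 * (s m)\<^sup>2 + 2 * (s a)\<^sup>2" unfolding v_def
      by (rule sq_diff_le)
    then show "d m * (v m)\<^sup>2 \<le> W m / X * (2 * (s m)\<^sup>2 + 2 * (s a)\<^sup>2)"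
      using d_le[of m] d_nonneg[of m] by (intro mult_mono) auto
  qed
  have sdv_nonneg: "0 \<le> (\<Sum>m\<in>I. d m * (v m)\<^sup>2)" using d_nonneg by (intro sum_nonneg) simp
  have "(\<Sum>m\<in>I. d m * v m)\<^sup>2 \<le> (2 * h * W x / X) * (\<Sum>m\<in>I. W m / X * (2 * (s m)\<^sup>2 + 2 * (s a)\<^sup>2))"
  proof -
    have "(\<Sum>m\<in>I. d m) * (\<Sum>m\<in>I. d m * (v m)\<^sup>2) \<le> (2 * h * W x / X) * (\<Sum>m\<in>I. d m * (v m)\<^sup>2)"
      using sd sdv_nonneg by (rule mult_right_mono)
    also have "\<dots> \<le> (2 * h * W x / X) * (\<Sum>m\<in>I. W m / X * (2 * (s m)\<^sup>2 + 2 * (s a)\<^sup>2))"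
      using sdv h X Wpos[of x] by (intro mult_left_mono) auto
    finally show ?thesis using CS by linarith
  qed
  also have "(\<Sum>m\<in>I. W m / X * (2 * (s m)\<^sup>2 + 2 * (s a)\<^sup>2)) =
      2 / X * (\<Sum>m\<in>I. W m * (s m)\<^sup>2) + 2 / X * (s a)\<^sup>2 * (\<Sum>m\<in>I. W m)"
  proof -
    have "(\<Sum>m\<in>I. W m / X * (2 * (s m)\<^sup>2 + 2 * (s a)\<^sup>2)) =
       (\<Sum>m\<in>I. 2 / X * (W m * (s m)\<^sup>2) + 2 / X * (s a)\<^sup>2 * W m)"
      by (intro sum.cong) (auto simp: algebra_simps)
    also have "\<dots> = 2 / X * (\<Sum>m\<in>I. W m * (s m)\<^sup>2) + 2 / X * (s a)\<^sup>2 * (\<Sum>m\<in>I. W m)"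
      by (simp only: sum.distrib sum_distrib_left)
    finally show ?thesis .
  qed
  finally have B1: "(\<Sum>m\<in>I. d m * v m)\<^sup>2 \<le> (2 * h * W x / X) * (2 / X * (\<Sum>m\<in>I. W m * (s m)\<^sup>2) + 2 / X * (s a)\<^sup>2 * (\<Sum>m\<in>I. W m))" .
  have T1: "W x * (\<Sum>m\<in>I. W m * (s m)\<^sup>2) \<le> 3 * (\<Sum>m\<in>I. (W m)\<^sup>2 * (s m)\<^sup>2)"
  proof -
    have "W x * (\<Sum>m\<in>I. W m * (s m)\<^sup>2) = (\<Sum>m\<in>I. W x * W m * (s m)\<^sup>2)"
      by (simp add: sum_distrib_left mult.assoc)
    also have "\<dots> \<le> (\<Sum>m\<in>I. 3 * ((W m)\<^sup>2 * (s m)\<^sup>2))"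
    proof (intro sum_mono)
      fix m assume m: "m \<in> I"
      have "W x * W m \<le> 3 * W m * W m" using WxWm[OF m] Wpos[of m] by (intro mult_right_mono) auto
      then have "W x * W m * (s m)\<^sup>2 \<le> 3 * W m * W m * (s m)\<^sup>2"
        by (rule mult_right_mono) simp
      also have "\<dots> = 3 * ((W m)\<^sup>2 * (s m)\<^sup>2)" by (simp add: power2_eq_square)
      finally show "W x * W m * (s m)\<^sup>2 \<le> 3 * ((W m)\<^sup>2 * (s m)\<^sup>2)" .
    qed
    also have "\<dots> = 3 * (\<Sum>m\<in>I. (W m)\<^sup>2 * (s m)\<^sup>2)" by (simp add: sum_distrib_left)
    finally show ?thesis .
  qed
  have T2: "(\<Sum>m\<in>I. W m) \<le> 2 * h * W x"
  proof -
    have "(\<Sum>m\<in>I. W m) \<le> (\<Sum>m\<in>I. W x)" using WmWx by (intro sum_mono) auto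
    also have "\<dots> = real (card I) * W x" by simp
    also have "\<dots> \<le> 2 * h * W x" using card Wpos[of x] by (intro mult_right_mono) auto
    finally show ?thesis .
  qed
  have B2: "(\<Sum>m\<in>I. d m * v m)\<^sup>2 \<le> 12 * h / X\<^sup>2 * (\<Sum>m\<in>I. (W m)\<^sup>2 * (s m)\<^sup>2)
            + 8 * (h / X)\<^sup>2 * (W x)\<^sup>2 * (s a)\<^sup>2"
  proof -
    have eq: "(2 * h * W x / X) * (2 / X * (\<Sum>m\<in>I. W m * (s m)\<^sup>2) + 2 / X * (s a)\<^sup>2 * (\<Sum>m\<in>I. W m))
        = 4 * h / X\<^sup>2 * (W x * (\<Sum>m\<in>I. W m * (s m)\<^sup>2)) + 4 * h / X\<^sup>2 * (s a)\<^sup>2 * W x * (\<Sum>m\<in>I. W m)"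
      using X by (simp add: power2_eq_square field_simps)
    have c1: "4 * h / X\<^sup>2 * (W x * (\<Sum>m\<in>I. W m * (s m)\<^sup>2)) \<le> 4 * h / X\<^sup>2 * (3 * (\<Sum>m\<in>I. (W m)\<^sup>2 * (s m)\<^sup>2))"
      using T1 h X by (intro mult_left_mono) auto
    have c2: "4 * h / X\<^sup>2 * (s a)\<^sup>2 * W x * (\<Sum>m\<in>I. W m) \<le> 4 * h / X\<^sup>2 * (s a)\<^sup>2 * W x * (2 * h * W x)"
      using T2 h X Wpos[of x] by (intro mult_left_mono) auto
    have "4 * h / X\<^sup>2 * (s a)\<^sup>2 * W x * (2 * h * W x) = 8 * (h / X)\<^sup>2 * (W x)\<^sup>2 * (s a)\<^sup>2"
      using X by (simp add: power2_eq_square field_simps)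
    then show ?thesis using B1 eq c1 c2 by simp
  qed
  have "(\<Sum>n\<in>I. f n * W n)\<^sup>2 \<le> 2 * (W (Suc b) * (s b - s a))\<^sup>2 + 2 * (\<Sum>m\<in>I. d m * v m)\<^sup>2"
    unfolding A by (rule sq_sum_le[THEN order_trans]) (simp add: algebra_simps)
  moreover have "(W (Suc b) * (s b - s a))\<^sup>2 \<le> (W x)\<^sup>2 * (s b - s a)\<^sup>2"
  proof -
    have "W (Suc b) \<le> W x" using ab h by (intro Wmono) auto
    then have "(W (Suc b))\<^sup>2 \<le> (W x)\<^sup>2" using Wpos[of "real (Suc b)"] by (intro power_mono) auto
    then show ?thesis unfolding power_mult_distrib by (intro mult_right_mono) auto
  qed
  ultimately show ?thesis using B2 unfolding I_def by linarith
qed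



lemma nat_floor_eq: "real m \<le> t \<Longrightarrow> t < real m + 1 \<Longrightarrow> nat \<lfloor>t\<rfloor> = m"
proof -
  assume "real m \<le> t" "t < real m + 1"
  then have "\<lfloor>t\<rfloor> = int m" by (intro floor_unique) auto
  then show ?thesis by simp
qed

lemma exp_weight_le:
  fixes t X :: real and j :: nat
  assumes X: "X > 0" and t: "t \<ge> 0" and j: "real j \<le> t / X"
  shows "(exp (- t / X))\<^sup>2 \<le> 1 / 2 ^ j"
proof -
  have "(2::real) ^ j \<le> exp 1 ^ j" using exp_ge_add_one_self[of 1] by (intro power_mono) auto
  also have "exp 1 ^ j = exp (real j)" by (simp add: exp_of_nat_mult[symmetric])
  also have "exp (real j) \<le> exp (2 * t / X)" using j t X
    by (simp add: divide_nonneg_pos)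
  finally have le: "(2::real) ^ j \<le> exp (2 * t / X)" .
  have sq: "(exp (- t / X))\<^sup>2 = exp (- (2 * t / X))"
    by (simp add: power2_eq_square exp_add[symmetric])
  have "(exp (- t / X))\<^sup>2 * 2 ^ j \<le> exp (- (2 * t / X)) * exp (2 * t / X)"
    unfolding sq by (rule mult_left_mono[OF le]) simp
  also have "\<dots> = 1" by (simp add: exp_minus)
  finally show ?thesis by (simp add: pos_le_divide_eq)
qed

lemma weight_bound:
  fixes g :: "real \<Rightarrow> ennreal" and X :: real
  assumes g: "g \<in> borel_measurable borel" and X: "X > 0"
  shows "(\<integral>\<^sup>+ t. ennreal ((exp (- t / X))\<^sup>2) * g t * indicator {0..} t \<partial>lborel)
     \<le> (\<Sum>j. ennreal (1 / 2 ^ j) * (\<integral>\<^sup>+ t. g t * indicator {0..real (Suc j) * X} t \<partial>lborel))"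
proof -
  have pw: "ennreal ((exp (- t / X))\<^sup>2) * g t * indicator {0..} t
      \<le> (\<Sum>j. ennreal (1 / 2 ^ j) * (g t * indicator {0..real (Suc j) * X} t))" for t
  proof (cases "t \<ge> 0")
    case False then show ?thesis by simp
  next
    case True
    define j where "j = nat \<lfloor>t / X\<rfloor>"
    have tX: "t / X \<ge> 0" using True X by simp
    have j1: "real j \<le> t / X" "t / X < real j + 1" using tX unfolding j_def by linarith+
    have tj: "t \<le> real (Suc j) * X" using j1(2) X by (simp add: field_simps)
    have "ennreal ((exp (- t / X))\<^sup>2) * g t * indicator {0..} t = ennreal ((exp (- t / X))\<^sup>2) * g t"
      using True by simp
    also have "\<dots> \<le> ennreal (1 / 2 ^ j) * g t"
      using exp_weight_le[OF X True j1(1)] by (intro mult_right_mono ennreal_leI) auto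
    also have "\<dots> = ennreal (1 / 2 ^ j) * (g t * indicator {0..real (Suc j) * X} t)"
      using True tj by simp
    also have "\<dots> \<le> (\<Sum>j. ennreal (1 / 2 ^ j) * (g t * indicator {0..real (Suc j) * X} t))"
      using sum_le_suminf[of "\<lambda>j. ennreal (1 / 2 ^ j) * (g t * indicator {0..real (Suc j) * X} t)" "{j}"]
      by simp
    finally show ?thesis .
  qed
  have "(\<integral>\<^sup>+ t. ennreal ((exp (- t / X))\<^sup>2) * g t * indicator {0..} t \<partial>lborel)
     \<le> (\<integral>\<^sup>+ t. (\<Sum>j. ennreal (1 / 2 ^ j) * (g t * indicator {0..real (Suc j) * X} t)) \<partial>lborel)"
    by (rule nn_integral_mono) (rule pw)
  also have "\<dots> = (\<Sum>j. \<integral>\<^sup>+ t. ennreal (1 / 2 ^ j) * (g t * indicator {0..real (Suc j) * X} t) \<partial>lborel)"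
    by (rule nn_integral_suminf) (use g in measurable)
  also have "\<dots> = (\<Sum>j. ennreal (1 / 2 ^ j) * (\<integral>\<^sup>+ t. g t * indicator {0..real (Suc j) * X} t \<partial>lborel))"
    by (subst nn_integral_cmult) (use g in auto)
  finally show ?thesis .
qed

lemma indicator_unit_sum:
  "(\<Sum>m. indicator {real m..<real m + 1} t :: ennreal) \<le> indicator {0..} t"
proof (cases "t \<ge> 0")
  case True
  have "(\<Sum>m. indicator {real m..<real m + 1} t :: ennreal) = (\<Sum>m\<in>{nat \<lfloor>t\<rfloor>}. indicator {real m..<real m + 1} t)"
    by (rule suminf_finite) (auto simp: indicator_def dest: nat_floor_eq)
  then show ?thesis using True by (simp add: indicator_def)
next
  case False
  then have "\<And>m. (indicator {real m..<real m + 1} t :: ennreal) = 0" by (simp add: indicator_def)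
  then show ?thesis by simp
qed

lemma sum_to_integral:
  fixes u :: "nat \<Rightarrow> real" and \<Phi> :: "real \<Rightarrow> ennreal"
  assumes \<Phi>: "\<Phi> \<in> borel_measurable borel" and u: "\<And>m. u m \<ge> 0"
    and le: "\<And>m t. real m \<le> t \<Longrightarrow> t < real m + 1 \<Longrightarrow> ennreal (u m) \<le> \<Phi> t"
  shows "(\<Sum>m. ennreal (u m)) \<le> (\<integral>\<^sup>+ t. \<Phi> t * indicator {0..} t \<partial>lborel)"
proof -
  have "(\<Sum>m. ennreal (u m)) = (\<Sum>m. \<integral>\<^sup>+ t. ennreal (u m) * indicator {real m..<real m + 1} t \<partial>lborel)"
    by (subst nn_integral_cmult_indicator) auto
  also have "\<dots> \<le> (\<Sum>m. \<integral>\<^sup>+ t. \<Phi> t * indicator {real m..<real m + 1} t \<partial>lborel)"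
    by (intro suminf_le nn_integral_mono) (auto simp: indicator_def intro: le)
  also have "\<dots> = (\<integral>\<^sup>+ t. (\<Sum>m. \<Phi> t * indicator {real m..<real m + 1} t) \<partial>lborel)"
    by (rule nn_integral_suminf[symmetric]) (use \<Phi> in measurable)
  also have "\<dots> \<le> (\<integral>\<^sup>+ t. \<Phi> t * indicator {0..} t \<partial>lborel)"
  proof (rule nn_integral_mono)
    fix t
    have "(\<Sum>m. \<Phi> t * indicator {real m..<real m + 1} t) = \<Phi> t * (\<Sum>m. indicator {real m..<real m + 1} t)"
      by simp
    also have "\<dots> \<le> \<Phi> t * indicator {0..} t" by (intro mult_left_mono indicator_unit_sum) auto
    finally show "(\<Sum>m. \<Phi> t * indicator {real m..<real m + 1} t) \<le> \<Phi> t * indicator {0..} t" .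
  qed
  finally show ?thesis .
qed

lemma window_int:
  fixes G :: "nat \<Rightarrow> real" and h :: real
  assumes "h \<ge> 0"
  shows "(\<integral>\<^sup>+ x. (\<Sum>m. ennreal (G m) * indicator {real m - h..real m} x) \<partial>lborel)
        = ennreal h * (\<Sum>m. ennreal (G m))"
proof -
  have "(\<integral>\<^sup>+ x. (\<Sum>m. ennreal (G m) * indicator {real m - h..real m} x) \<partial>lborel)
     = (\<Sum>m. \<integral>\<^sup>+ x. ennreal (G m) * indicator {real m - h..real m} x \<partial>lborel)"
    by (rule nn_integral_suminf) measurable
  also have "\<dots> = (\<Sum>m. ennreal (G m) * ennreal h)"
    using assms by (subst nn_integral_cmult_indicator) auto
  also have "\<dots> = ennreal h * (\<Sum>m. ennreal (G m))"
    by (simp add: mult.commute)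
  finally show ?thesis .
qed

lemma window_pw:
  fixes G :: "nat \<Rightarrow> real" and h x :: real
  assumes G: "\<And>m. G m \<ge> 0" and I: "\<And>m. m \<in> I \<Longrightarrow> real m - h \<le> x \<and> x \<le> real m" and fin: "finite I"
  shows "ennreal (\<Sum>m\<in>I. G m) \<le> (\<Sum>m. ennreal (G m) * indicator {real m - h..real m} x)"
proof -
  have "ennreal (\<Sum>m\<in>I. G m) = (\<Sum>m\<in>I. ennreal (G m))" using G by simp
  also have "\<dots> = (\<Sum>m\<in>I. ennreal (G m) * indicator {real m - h..real m} x)"
    using I by (intro sum.cong) (auto simp: indicator_def)
  also have "\<dots> \<le> (\<Sum>m. ennreal (G m) * indicator {real m - h..real m} x)"
    by (rule sum_le_suminf) (use fin in auto)
  finally show ?thesis .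
qed

lemma int_approx:
  fixes P E :: "real \<Rightarrow> real"
  assumes P: "P \<in> borel_measurable borel" and E: "E \<in> borel_measurable borel"
    and Y: "Y \<ge> 0" and B: "B \<ge> 0" and close: "\<And>t. 0 \<le> t \<Longrightarrow> t \<le> Y \<Longrightarrow> \<bar>P t - E t\<bar> \<le> B"
  shows "(\<integral>\<^sup>+ t. ennreal ((P t)\<^sup>2) * indicator {0..Y} t \<partial>lborel)
     \<le> 2 * (\<integral>\<^sup>+ t. ennreal ((E t)\<^sup>2) * indicator {0..Y} t \<partial>lborel) + ennreal (2 * B\<^sup>2 * Y)"
proof -
  have pw: "ennreal ((P t)\<^sup>2) * indicator {0..Y} t \<le>
      2 * (ennreal ((E t)\<^sup>2) * indicator {0..Y} t) + ennreal (2 * B\<^sup>2) * indicator {0..Y} t" for t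
  proof (cases "0 \<le> t \<and> t \<le> Y")
    case True
    have "(P t)\<^sup>2 = (E t + (P t - E t))\<^sup>2" by simp
    also have "\<dots> \<le> 2 * (E t)\<^sup>2 + 2 * (P t - E t)\<^sup>2"
    proof -
      have "0 \<le> (E t - (P t - E t))\<^sup>2" by simp
      then show ?thesis by (simp add: power2_eq_square algebra_simps)
    qed
    also have "(P t - E t)\<^sup>2 \<le> B\<^sup>2"
      using close[of t] True B by (simp add: abs_le_square_iff[symmetric] abs_le_iff)
    finally have "(P t)\<^sup>2 \<le> 2 * (E t)\<^sup>2 + 2 * B\<^sup>2" by simp
    then have "ennreal ((P t)\<^sup>2) \<le> ennreal (2 * (E t)\<^sup>2) + ennreal (2 * B\<^sup>2)"
      by (simp add: ennreal_plus[symmetric] del: ennreal_plus)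
    also have "ennreal (2 * (E t)\<^sup>2) = 2 * ennreal ((E t)\<^sup>2)" by (simp add: ennreal_mult)
    finally show ?thesis using True by simp
  next
    case False then show ?thesis by simp
  qed
  have "(\<integral>\<^sup>+ t. ennreal ((P t)\<^sup>2) * indicator {0..Y} t \<partial>lborel)
     \<le> (\<integral>\<^sup>+ t. 2 * (ennreal ((E t)\<^sup>2) * indicator {0..Y} t) + ennreal (2 * B\<^sup>2) * indicator {0..Y} t \<partial>lborel)"
    by (rule nn_integral_mono) (rule pw)
  also have "\<dots> = 2 * (\<integral>\<^sup>+ t. ennreal ((E t)\<^sup>2) * indicator {0..Y} t \<partial>lborel)
      + (\<integral>\<^sup>+ t. ennreal (2 * B\<^sup>2) * indicator {0..Y} t \<partial>lborel)"
    using E by (subst nn_integral_add) (auto simp: nn_integral_cmult)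
  also have "(\<integral>\<^sup>+ t. ennreal (2 * B\<^sup>2) * indicator {0..Y} t \<partial>lborel) = ennreal (2 * B\<^sup>2 * Y)"
    using Y by (simp add: nn_integral_cmult_indicator ennreal_mult[symmetric])
  finally show ?thesis .
qed



definition SS :: "nat \<Rightarrow> nat \<Rightarrow> real \<Rightarrow> real \<Rightarrow> real \<Rightarrow> real" where
  "SS q a c be t = sF q a c be (nat \<lfloor>t\<rfloor>)"

definition EE :: "nat \<Rightarrow> nat \<Rightarrow> real \<Rightarrow> real \<Rightarrow> real \<Rightarrow> real" where
  "EE q a c be t = psi t q a - t / real (totient q) + c / real (totient q) * (t powr be / be)"

lemma SS_meas[measurable]: "SS q a c be \<in> borel_measurable borel"
proof -
  have "(\<lambda>t::real. sF q a c be (nat \<lfloor>t\<rfloor>)) \<in> borel_measurable borel"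
  proof -
    have 1: "(\<lambda>t::real. nat \<lfloor>t\<rfloor>) \<in> borel \<rightarrow>\<^sub>M count_space UNIV"
      using measurable_real_floor by (rule measurable_compose) simp
    have 2: "(sF q a c be) \<in> count_space UNIV \<rightarrow>\<^sub>M (borel :: real measure)" by simp
    show ?thesis using measurable_compose[OF 1 2] by simp
  qed
  then show ?thesis unfolding SS_def[abs_def] .
qed

lemma psi_meas[measurable]: "(\<lambda>t. psi t q a) \<in> borel_measurable borel"
proof -
  have "(\<lambda>t::real. ps q a (nat \<lfloor>t\<rfloor>)) \<in> borel_measurable borel"
  proof -
    have 1: "(\<lambda>t::real. nat \<lfloor>t\<rfloor>) \<in> borel \<rightarrow>\<^sub>M count_space UNIV"
      using measurable_real_floor by (rule measurable_compose) simp
    have 2: "(ps q a) \<in> count_space UNIV \<rightarrow>\<^sub>M (borel :: real measure)" by simp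
    show ?thesis using measurable_compose[OF 1 2] by simp
  qed
  then show ?thesis unfolding psi_eq .
qed

lemma EE_meas[measurable]: "EE q a c be \<in> borel_measurable borel"
  unfolding EE_def[abs_def] by measurable

lemma H_eq: "H q a c be Y = (\<integral>\<^sup>+ t. ennreal ((EE q a c be t)\<^sup>2) * indicator {0..Y} t \<partial>lborel)"
  unfolding H_def EE_def by simp

lemma K_eq: "K q a c be Y h = (\<integral>\<^sup>+ t. ennreal ((EE q a c be (t + h) - EE q a c be t)\<^sup>2) * indicator {0..Y} t \<partial>lborel)"
proof -
  have "psi (t + h) q a - psi t q a - h / real (totient q)
         + c / real (totient q) * (((t + h) powr be - t powr be) / be)
      = EE q a c be (t + h) - EE q a c be t" for t
    unfolding EE_def by (simp add: add_divide_distrib diff_divide_distrib algebra_simps)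
  then show ?thesis unfolding K_def by simp
qed

lemma SE_close:
  assumes "0 \<le> t" "q \<ge> 1" "1/2 \<le> be" "be \<le> 1" "\<bar>c\<bar> \<le> 1"
  shows "\<bar>SS q a c be t - EE q a c be t\<bar> \<le> 5 / real (totient q)"
proof -
  have p: "real (totient q) \<ge> 1" using assms(2) by (simp add: Suc_le_eq totient_gt_0_iff)
  have "\<bar>SS q a c be t - EE q a c be t\<bar> \<le> (1 + 2 / be) / real (totient q)"
    unfolding SS_def EE_def by (rule D_bound) (use assms in auto)
  also have "\<dots> \<le> 5 / real (totient q)"
  proof -
    have "2 / be \<le> 4" using assms(3) by (simp add: field_simps)
    then show ?thesis using p by (intro divide_right_mono) auto
  qed
  finally show ?thesis .
qed

lemma SS_part:
  assumes q: "q \<ge> 1" and X: "X > 0" and be: "1/2 \<le> be" "be \<le> 1" and c: "\<bar>c\<bar> \<le> 1"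
  shows "(\<integral>\<^sup>+ t. ennreal ((exp (- t / X))\<^sup>2) * ennreal ((SS q a c be t)\<^sup>2) * indicator {0..} t \<partial>lborel)
    \<le> 50 * (\<Sum>j. ennreal (1 / 2 ^ j) * (H q a c be (real (Suc j) * X)
                                   + ennreal (real (Suc j) * X / (real (totient q))\<^sup>2)))"
proof -
  define p where "p = real (totient q)"
  have p: "p \<ge> 1" unfolding p_def using q by (simp add: Suc_le_eq totient_gt_0_iff)
  have "(\<integral>\<^sup>+ t. ennreal ((exp (- t / X))\<^sup>2) * ennreal ((SS q a c be t)\<^sup>2) * indicator {0..} t \<partial>lborel)
     \<le> (\<Sum>j. ennreal (1 / 2 ^ j) * (\<integral>\<^sup>+ t. ennreal ((SS q a c be t)\<^sup>2) * indicator {0..real (Suc j) * X} t \<partial>lborel))"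
    by (rule weight_bound) (use X in auto)
  also have "\<dots> \<le> (\<Sum>j. ennreal (1 / 2 ^ j) * (50 * (H q a c be (real (Suc j) * X) + ennreal (real (Suc j) * X / p\<^sup>2))))"
  proof (intro suminf_le mult_left_mono summableI)
    fix j
    define Y where "Y = real (Suc j) * X"
    have Y: "Y \<ge> 0" unfolding Y_def using X by simp
    have "(\<integral>\<^sup>+ t. ennreal ((SS q a c be t)\<^sup>2) * indicator {0..Y} t \<partial>lborel)
       \<le> 2 * (\<integral>\<^sup>+ t. ennreal ((EE q a c be t)\<^sup>2) * indicator {0..Y} t \<partial>lborel) + ennreal (2 * (5 / p)\<^sup>2 * Y)"
      by (rule int_approx) (use Y p SE_close[OF _ q be c] in \<open>auto simp: p_def\<close>)
    also have "\<dots> = 2 * H q a c be Y + 50 * ennreal (Y / p\<^sup>2)"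
    proof -
      have e: "2 * (5 / p)\<^sup>2 * Y = 50 * (Y / p\<^sup>2)" using p by (simp add: power2_eq_square field_simps)
      have "ennreal (2 * (5 / p)\<^sup>2 * Y) = 50 * ennreal (Y / p\<^sup>2)"
        unfolding e by (subst ennreal_mult') auto
      then show ?thesis unfolding H_eq by simp
    qed
    also have "\<dots> \<le> 50 * (H q a c be Y + ennreal (Y / p\<^sup>2))"
      by (simp add: distrib_left mult_right_mono)
    finally show "(\<integral>\<^sup>+ t. ennreal ((SS q a c be t)\<^sup>2) * indicator {0..real (Suc j) * X} t \<partial>lborel)
       \<le> 50 * (H q a c be (real (Suc j) * X) + ennreal (real (Suc j) * X / p\<^sup>2))" unfolding Y_def .
  qed simp
  also have "\<dots> = 50 * (\<Sum>j. ennreal (1 / 2 ^ j) * (H q a c be (real (Suc j) * X) + ennreal (real (Suc j) * X / p\<^sup>2)))"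
  proof -
    have "\<And>j. ennreal (1 / 2 ^ j) * (50 * (H q a c be (real (Suc j) * X) + ennreal (real (Suc j) * X / p\<^sup>2))) = 50 * (ennreal (1 / 2 ^ j) * (H q a c be (real (Suc j) * X) + ennreal (real (Suc j) * X / p\<^sup>2)))"
      by (simp only: mult.left_commute)
    then show ?thesis by (simp only: ennreal_suminf_cmult)
  qed
  finally show ?thesis unfolding p_def .
qed

lemma Delta_part:
  assumes q: "q \<ge> 1" and X: "X > 0" and h: "h \<ge> 0" and be: "1/2 \<le> be" "be \<le> 1" and c: "\<bar>c\<bar> \<le> 1"
  shows "(\<integral>\<^sup>+ t. ennreal ((exp (- t / X))\<^sup>2) * ennreal ((SS q a c be (t + h) - SS q a c be t)\<^sup>2) * indicator {0..} t \<partial>lborel)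
    \<le> 200 * (\<Sum>j. ennreal (1 / 2 ^ j) * (K q a c be (real (Suc j) * X) h
                                   + ennreal (real (Suc j) * X / (real (totient q))\<^sup>2)))"
proof -
  define p where "p = real (totient q)"
  have p: "p \<ge> 1" unfolding p_def using q by (simp add: Suc_le_eq totient_gt_0_iff)
  have "(\<integral>\<^sup>+ t. ennreal ((exp (- t / X))\<^sup>2) * ennreal ((SS q a c be (t + h) - SS q a c be t)\<^sup>2) * indicator {0..} t \<partial>lborel)
     \<le> (\<Sum>j. ennreal (1 / 2 ^ j) * (\<integral>\<^sup>+ t. ennreal ((SS q a c be (t + h) - SS q a c be t)\<^sup>2) * indicator {0..real (Suc j) * X} t \<partial>lborel))"
    by (rule weight_bound) (use X in auto)
  also have "\<dots> \<le> (\<Sum>j. ennreal (1 / 2 ^ j) * (200 * (K q a c be (real (Suc j) * X) h + ennreal (real (Suc j) * X / p\<^sup>2))))"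
  proof (intro suminf_le mult_left_mono summableI)
    fix j
    define Y where "Y = real (Suc j) * X"
    have Y: "Y \<ge> 0" unfolding Y_def using X by simp
    have close: "\<bar>(SS q a c be (t + h) - SS q a c be t) - (EE q a c be (t + h) - EE q a c be t)\<bar> \<le> 10 / p"
      if "0 \<le> t" for t
    proof -
      have "\<bar>SS q a c be (t + h) - EE q a c be (t + h)\<bar> \<le> 5 / p"
        unfolding p_def by (rule SE_close) (use that h q be c in auto)
      moreover have "\<bar>SS q a c be t - EE q a c be t\<bar> \<le> 5 / p"
        unfolding p_def by (rule SE_close) (use that h q be c in auto)
      ultimately show ?thesis by linarith
    qed
    have "(\<integral>\<^sup>+ t. ennreal ((SS q a c be (t + h) - SS q a c be t)\<^sup>2) * indicator {0..Y} t \<partial>lborel)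
       \<le> 2 * (\<integral>\<^sup>+ t. ennreal ((EE q a c be (t + h) - EE q a c be t)\<^sup>2) * indicator {0..Y} t \<partial>lborel) + ennreal (2 * (10 / p)\<^sup>2 * Y)"
      by (rule int_approx) (use Y p close in auto)
    also have "\<dots> = 2 * K q a c be Y h + 200 * ennreal (Y / p\<^sup>2)"
    proof -
      have e: "2 * (10 / p)\<^sup>2 * Y = 200 * (Y / p\<^sup>2)" using p by (simp add: power2_eq_square field_simps)
      have "ennreal (2 * (10 / p)\<^sup>2 * Y) = 200 * ennreal (Y / p\<^sup>2)"
        unfolding e by (subst ennreal_mult') auto
      then show ?thesis unfolding K_eq by simp
    qed
    also have "\<dots> \<le> 200 * (K q a c be Y h + ennreal (Y / p\<^sup>2))"
      by (simp add: distrib_left mult_right_mono)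
    finally show "(\<integral>\<^sup>+ t. ennreal ((SS q a c be (t + h) - SS q a c be t)\<^sup>2) * indicator {0..real (Suc j) * X} t \<partial>lborel)
       \<le> 200 * (K q a c be (real (Suc j) * X) h + ennreal (real (Suc j) * X / p\<^sup>2))" unfolding Y_def .
  qed simp
  also have "\<dots> = 200 * (\<Sum>j. ennreal (1 / 2 ^ j) * (K q a c be (real (Suc j) * X) h + ennreal (real (Suc j) * X / p\<^sup>2)))"
  proof -
    have "\<And>j. ennreal (1 / 2 ^ j) * (200 * (K q a c be (real (Suc j) * X) h + ennreal (real (Suc j) * X / p\<^sup>2))) = 200 * (ennreal (1 / 2 ^ j) * (K q a c be (real (Suc j) * X) h + ennreal (real (Suc j) * X / p\<^sup>2)))"
      by (simp only: mult.left_commute)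
    then show ?thesis by (simp only: ennreal_suminf_cmult)
  qed
  finally show ?thesis unfolding p_def .
qed



lemma real_le_iff_nat_floor0:
  assumes "0 \<le> x" shows "real n \<le> x \<longleftrightarrow> n \<le> nat \<lfloor>x\<rfloor>"
proof -
  have "real n \<le> x \<longleftrightarrow> int n \<le> \<lfloor>x\<rfloor>" by (simp add: le_floor_iff)
  also have "\<dots> \<longleftrightarrow> n \<le> nat \<lfloor>x\<rfloor>" using assms by linarith
  finally show ?thesis .
qed

lemma J_set:
  assumes "0 \<le> x" "0 \<le> h"
  shows "{n::nat. x < real n \<and> real n \<le> x + h} = {nat \<lfloor>x\<rfloor><..nat \<lfloor>x + h\<rfloor>}"
  using real_le_iff_nat_floor0[OF assms(1)] real_le_iff_nat_floor0[of "x + h"] assms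
  by (auto simp: not_le[symmetric])

lemma W_shift:
  fixes X t :: real and m :: nat
  assumes X: "X \<ge> 2" and t: "real m \<le> t" "t < real m + 1"
  shows "(exp (- real m / X))\<^sup>2 \<le> 3 * (exp (- t / X))\<^sup>2"
proof -
  have sq: "(exp y)\<^sup>2 = exp (2 * y)" for y :: real
    by (simp add: power2_eq_square exp_add[symmetric])
  have "2 * (- real m / X) \<le> 2 * (- t / X) + 1" using X t by (simp add: field_simps)
  then have "exp (2 * (- real m / X)) \<le> exp (2 * (- t / X) + 1)" by simp
  also have "\<dots> = exp (2 * (- t / X)) * exp 1" by (simp add: exp_add[symmetric])
  also have "\<dots> \<le> exp (2 * (- t / X)) * 3" using exp_le by (intro mult_left_mono) auto
  finally show ?thesis unfolding sq by simp
qed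

lemma main_bound:
  assumes q: "q \<ge> 1" and X: "X \<ge> 2" and h: "1 \<le> h" "h \<le> X"
    and be: "1/2 \<le> be" "be \<le> 1" and c: "\<bar>c\<bar> \<le> 1"
  shows "J q a c be X h \<le> ennreal 4400 * RHS q a c be X h"
proof -
  define S where "S = SS q a c be"
  define W where "W = (\<lambda>t::real. exp (- t / X))"
  define G where "G = (\<lambda>m::nat. (W (real m))\<^sup>2 * (sF q a c be m)\<^sup>2)"
  define P where "P = (\<Sum>j. ennreal (1 / 2 ^ j) * (H q a c be (real (Suc j) * X)
                                   + ennreal (real (Suc j) * X / (real (totient q))\<^sup>2)))"
  define Q where "Q = (\<Sum>j. ennreal (1 / 2 ^ j) * (K q a c be (real (Suc j) * X) h
                                   + ennreal (real (Suc j) * X / (real (totient q))\<^sup>2)))"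
  define R where "R = ennreal (h\<^sup>2 / X\<^sup>2)"
  have RHS: "RHS q a c be X h = R * P + Q" unfolding RHS_def R_def P_def Q_def ..
  have X0: "X > 0" using X by simp
  have h0: "0 \<le> h" using h by simp
  have Gnn: "0 \<le> G m" for m unfolding G_def by simp
  have S_meas[measurable]: "S \<in> borel_measurable borel" unfolding S_def by simp
  have pw: "ennreal ((\<bar>\<Sum>n\<in>{n. x < real n \<and> real n \<le> x + h}. F q a c be n * exp (- real n / X)\<bar>)\<^sup>2) * indicator {0..} x
    \<le> 2 * (ennreal ((W x)\<^sup>2) * ennreal ((S (x + h) - S x)\<^sup>2) * indicator {0..} x)
      + ennreal (16 * (h / X)\<^sup>2) * (ennreal ((W x)\<^sup>2) * ennreal ((S x)\<^sup>2) * indicator {0..} x)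
      + ennreal (24 * h / X\<^sup>2) * (\<Sum>m. ennreal (G m) * indicator {real m - h..real m} x)" for x
  proof (cases "0 \<le> x")
    case False then show ?thesis by simp
  next
    case True
    define a' where "a' = nat \<lfloor>x\<rfloor>"
    define b' where "b' = nat \<lfloor>x + h\<rfloor>"
    have ab: "real a' \<le> x" "x < real a' + 1" "real b' \<le> x + h" "x + h < real b' + 1"
      unfolding a'_def b'_def using True h by linarith+
    have set: "{n. x < real n \<and> real n \<le> x + h} = {a'<..b'}"
      unfolding a'_def b'_def by (rule J_set[OF True h0])
    have main: "(\<Sum>n\<in>{a'<..b'}. F q a c be n * W (real n))\<^sup>2 \<le> 2 * (W x)\<^sup>2 * (S (x + h) - S x)\<^sup>2
        + 16 * (h / X)\<^sup>2 * (W x)\<^sup>2 * (S x)\<^sup>2 + 24 * h / X\<^sup>2 * (\<Sum>m\<in>{a'<..b'}. G m)"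
      using pointwise[OF X0 h True ab, of "F q a c be"]
      unfolding S_def SS_def G_def W_def sF_def a'_def b'_def by simp
    have win: "ennreal (\<Sum>m\<in>{a'<..b'}. G m) \<le> (\<Sum>m. ennreal (G m) * indicator {real m - h..real m} x)"
      by (rule window_pw) (use ab Gnn in auto)
    have nn1: "0 \<le> 2 * (W x)\<^sup>2 * (S (x + h) - S x)\<^sup>2" by simp
    have nn2: "0 \<le> 16 * (h / X)\<^sup>2 * (W x)\<^sup>2 * (S x)\<^sup>2" by simp
    have nn3: "0 \<le> 24 * h / X\<^sup>2 * (\<Sum>m\<in>{a'<..b'}. G m)" using h0 Gnn by (simp add: sum_nonneg)
    have "ennreal ((\<bar>\<Sum>n\<in>{n. x < real n \<and> real n \<le> x + h}. F q a c be n * exp (- real n / X)\<bar>)\<^sup>2) * indicator {0..} x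
        = ennreal ((\<Sum>n\<in>{a'<..b'}. F q a c be n * W (real n))\<^sup>2)"
      using True unfolding set W_def by simp
    also have "\<dots> \<le> ennreal (2 * (W x)\<^sup>2 * (S (x + h) - S x)\<^sup>2
        + 16 * (h / X)\<^sup>2 * (W x)\<^sup>2 * (S x)\<^sup>2 + 24 * h / X\<^sup>2 * (\<Sum>m\<in>{a'<..b'}. G m))"
      using main by (rule ennreal_leI)
    also have "\<dots> = ennreal (2 * (W x)\<^sup>2 * (S (x + h) - S x)\<^sup>2)
        + ennreal (16 * (h / X)\<^sup>2 * (W x)\<^sup>2 * (S x)\<^sup>2) + ennreal (24 * h / X\<^sup>2 * (\<Sum>m\<in>{a'<..b'}. G m))"
      using nn1 nn2 nn3 by (simp add: ennreal_plus[symmetric] del: ennreal_plus)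
    also have "ennreal (2 * (W x)\<^sup>2 * (S (x + h) - S x)\<^sup>2) = 2 * (ennreal ((W x)\<^sup>2) * ennreal ((S (x + h) - S x)\<^sup>2) * indicator {0..} x)"
      using True by (simp add: ennreal_mult mult.assoc)
    also have "ennreal (16 * (h / X)\<^sup>2 * (W x)\<^sup>2 * (S x)\<^sup>2) = ennreal (16 * (h / X)\<^sup>2) * (ennreal ((W x)\<^sup>2) * ennreal ((S x)\<^sup>2) * indicator {0..} x)"
      using True by (simp add: ennreal_mult mult.assoc)
    also have "ennreal (24 * h / X\<^sup>2 * (\<Sum>m\<in>{a'<..b'}. G m)) = ennreal (24 * h / X\<^sup>2) * ennreal (\<Sum>m\<in>{a'<..b'}. G m)"
      by (rule ennreal_mult) (use h0 Gnn in \<open>auto simp: sum_nonneg\<close>)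
    also have "\<dots> \<le> ennreal (24 * h / X\<^sup>2) * (\<Sum>m. ennreal (G m) * indicator {real m - h..real m} x)"
      by (rule mult_left_mono[OF win]) simp
    finally show ?thesis by simp
  qed
  define I1 where "I1 = (\<integral>\<^sup>+ x. ennreal ((W x)\<^sup>2) * ennreal ((S (x + h) - S x)\<^sup>2) * indicator {0..} x \<partial>lborel)"
  define I2 where "I2 = (\<integral>\<^sup>+ x. ennreal ((W x)\<^sup>2) * ennreal ((S x)\<^sup>2) * indicator {0..} x \<partial>lborel)"
  define I3 where "I3 = (\<integral>\<^sup>+ x. (\<Sum>m. ennreal (G m) * indicator {real m - h..real m} x) \<partial>lborel)"
  have "J q a c be X h \<le> (\<integral>\<^sup>+ x. 2 * (ennreal ((W x)\<^sup>2) * ennreal ((S (x + h) - S x)\<^sup>2) * indicator {0..} x)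
      + ennreal (16 * (h / X)\<^sup>2) * (ennreal ((W x)\<^sup>2) * ennreal ((S x)\<^sup>2) * indicator {0..} x)
      + ennreal (24 * h / X\<^sup>2) * (\<Sum>m. ennreal (G m) * indicator {real m - h..real m} x) \<partial>lborel)"
    unfolding J_def by (rule nn_integral_mono) (rule pw)
  also have "\<dots> = 2 * I1 + ennreal (16 * (h / X)\<^sup>2) * I2 + ennreal (24 * h / X\<^sup>2) * I3"
    unfolding I1_def I2_def I3_def W_def
    by (subst nn_integral_add, measurable, subst nn_integral_add, measurable)
       (simp add: nn_integral_cmult)
  finally have J1: "J q a c be X h \<le> 2 * I1 + ennreal (16 * (h / X)\<^sup>2) * I2 + ennreal (24 * h / X\<^sup>2) * I3" .
  have I1: "I1 \<le> 200 * Q"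
    unfolding I1_def Q_def W_def S_def by (rule Delta_part) (use q X0 h0 be c in auto)
  have I2: "I2 \<le> 50 * P"
    unfolding I2_def P_def W_def S_def by (rule SS_part) (use q X0 be c in auto)
  have sG: "(\<Sum>m. ennreal (G m)) \<le> 3 * I2"
  proof -
    have "(\<Sum>m. ennreal (G m)) \<le> (\<integral>\<^sup>+ t. (3 * (ennreal ((W t)\<^sup>2) * ennreal ((S t)\<^sup>2))) * indicator {0..} t \<partial>lborel)"
    proof (rule sum_to_integral)
      show "(\<lambda>t. 3 * (ennreal ((W t)\<^sup>2) * ennreal ((S t)\<^sup>2))) \<in> borel_measurable borel"
        unfolding W_def by measurable
      show "0 \<le> G m" for m by (rule Gnn)
      fix m t assume mt: "real m \<le> t" "t < real m + 1"
      have St: "S t = sF q a c be m" unfolding S_def SS_def using nat_floor_eq[OF mt] by simp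
      have "G m \<le> 3 * (W t)\<^sup>2 * (sF q a c be m)\<^sup>2"
        unfolding G_def W_def using W_shift[OF X mt] by (intro mult_right_mono) auto
      then have "ennreal (G m) \<le> ennreal (3 * ((W t)\<^sup>2 * (S t)\<^sup>2))" unfolding St
        by (intro ennreal_leI) (simp add: mult.assoc)
      also have "\<dots> = 3 * (ennreal ((W t)\<^sup>2) * ennreal ((S t)\<^sup>2))"
        by (simp add: ennreal_mult)
      finally show "ennreal (G m) \<le> 3 * (ennreal ((W t)\<^sup>2) * ennreal ((S t)\<^sup>2))" .
    qed
    also have "\<dots> = 3 * I2" unfolding I2_def W_def
      by (subst nn_integral_cmult[symmetric]) (measurable, simp add: mult.assoc)
    finally show ?thesis .
  qed
  have I3: "I3 = ennreal h * (\<Sum>m. ennreal (G m))"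
    unfolding I3_def by (rule window_int[OF h0])
  have "J q a c be X h \<le> 2 * (200 * Q) + ennreal (16 * (h / X)\<^sup>2) * (50 * P) + ennreal (24 * h / X\<^sup>2) * (ennreal h * (3 * (50 * P)))"
    using J1 I1 I2 sG unfolding I3
    by (smt (verit) add_mono mult_left_mono order_trans zero_le)
  also have "\<dots> = 400 * Q + 4400 * (R * P)"
  proof -
    have r1e: "16 * (h / X)\<^sup>2 = 16 * (h\<^sup>2 / X\<^sup>2)" by (simp add: power_divide)
    have r1: "ennreal (16 * (h / X)\<^sup>2) = 16 * R" unfolding R_def r1e
      by (subst ennreal_mult') auto
    have r2e: "24 * h / X\<^sup>2 * h = 24 * (h\<^sup>2 / X\<^sup>2)" by (simp add: power2_eq_square)
    have r2: "ennreal (24 * h / X\<^sup>2) * ennreal h = 24 * R"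
    proof -
      have "ennreal (24 * h / X\<^sup>2) * ennreal h = ennreal (24 * h / X\<^sup>2 * h)"
        by (rule ennreal_mult[symmetric]) (use h0 in auto)
      also have "\<dots> = ennreal (24 * (h\<^sup>2 / X\<^sup>2))" by (simp only: r2e)
      also have "\<dots> = 24 * ennreal (h\<^sup>2 / X\<^sup>2)" by (subst ennreal_mult') simp_all
      finally show ?thesis unfolding R_def .
    qed
    have n1: "(16::ennreal) * 50 = 800" "(24::ennreal) * (3 * 50) = 3600" by simp_all
    have "ennreal (16 * (h / X)\<^sup>2) * (50 * P) = (16 * 50) * (R * P)" unfolding r1
      by (simp only: mult_ac)
    then have A1: "ennreal (16 * (h / X)\<^sup>2) * (50 * P) = 800 * (R * P)" unfolding n1 .
    have "ennreal (24 * h / X\<^sup>2) * (ennreal h * (3 * (50 * P))) = (ennreal (24 * h / X\<^sup>2) * ennreal h) * (3 * (50 * P))"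
      by (simp only: mult_ac)
    also have "\<dots> = (24 * (3 * 50)) * (R * P)" unfolding r2 by (simp only: mult_ac)
    finally have A2: "ennreal (24 * h / X\<^sup>2) * (ennreal h * (3 * (50 * P))) = 3600 * (R * P)" unfolding n1 .
    have n2: "(2::ennreal) * (200 * Q) = 400 * Q" by (simp add: mult.assoc[symmetric])
    have n3: "800 * (R * P) + 3600 * (R * P) = (4400::ennreal) * (R * P)"
      by (simp add: distrib_right[symmetric])
    show ?thesis unfolding A1 A2 n2 using n3 by (simp add: add.assoc)
  qed
  also have "\<dots> \<le> 4400 * (R * P + Q)"
    by (simp add: distrib_left add.commute mult_right_mono add_mono)
  finally show ?thesis unfolding RHS by simp
qed


theorem lemma4p3:
  fixes c0 :: real
  assumes "0 < c0" and "c0 \<le> 1 / 2"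
  shows "\<exists>C :: real. C > 0 \<and>
    (\<forall>(q::nat) (a::nat) (X::real) (h::real).
       q \<ge> 1 \<longrightarrow> coprime a q \<longrightarrow> X \<ge> 2 \<longrightarrow> 1 \<le> h \<longrightarrow> h \<le> X \<longrightarrow>
       ((\<not> (\<exists>chi \<beta>. exceptional_zero c0 q chi \<beta>)) \<longrightarrow>
           J q a 0 1 X h \<le> ennreal C * RHS q a 0 1 X h) \<and>
       (\<forall>chi \<beta>. exceptional_zero c0 q chi \<beta> \<longrightarrow>
           J q a (real_of_int (chi a)) \<beta> X h \<le> ennreal C * RHS q a (real_of_int (chi a)) \<beta> X h))"
proof -
  have key: "((\<not> (\<exists>chi \<beta>. exceptional_zero c0 q chi \<beta>)) \<longrightarrow>
           J q a 0 1 X h \<le> ennreal 4400 * RHS q a 0 1 X h) \<and>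
       (\<forall>chi \<beta>. exceptional_zero c0 q chi \<beta> \<longrightarrow>
           J q a (real_of_int (chi a)) \<beta> X h \<le> ennreal 4400 * RHS q a (real_of_int (chi a)) \<beta> X h)"
    if q: "q \<ge> 1" and X: "X \<ge> 2" and h: "1 \<le> h" "h \<le> X" for q a :: nat and X h :: real
  proof (intro conjI impI allI)
    show "J q a 0 1 X h \<le> ennreal 4400 * RHS q a 0 1 X h"
      by (rule main_bound) (use q X h in auto)
  next
    fix chi \<beta> assume ez: "exceptional_zero c0 q chi \<beta>"
    then have rc: "real_dirichlet_char q chi" and np: "nonprincipal q chi"
      and b1: "1 - c0 / ln (real q) < \<beta>" and b2: "\<beta> < 1"
      unfolding exceptional_zero_def by auto
    have "chi a \<in> {-1, 0, 1}" using rc unfolding real_dirichlet_char_def by auto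
    then have c: "\<bar>real_of_int (chi a)\<bar> \<le> 1" by auto
    have q3: "q \<ge> 3"
    proof (rule ccontr)
      assume "\<not> q \<ge> 3"
      then have "q = 1 \<or> q = 2" using q by auto
      then show False
      proof
        assume "q = 1" then show False using b1 b2 by simp
      next
        assume q2: "q = 2"
        have per: "chi (n + 2) = chi n" for n using rc q2 unfolding real_dirichlet_char_def by auto
        have c1: "chi 1 = 1" using rc unfolding real_dirichlet_char_def by auto
        have odd1: "chi (2 * k + 1) = 1" for k
        proof (induction k)
          case 0 then show ?case using c1 by simp
        next
          case (Suc k)
          have "2 * Suc k + 1 = (2 * k + 1) + 2" by simp
          then show ?case using Suc per[of "2 * k + 1"] by simp
        qed
        from np obtain n where n: "coprime n q" "chi n \<noteq> 1" unfolding nonprincipal_def by auto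
        then have "odd n" using q2 by auto
        then obtain k where "n = 2 * k + 1" by (rule oddE)
        then show False using n odd1 by simp
      qed
    qed
    have lnq: "ln (real q) \<ge> 1"
    proof -
      have "ln (exp 1) \<le> ln (real q)" using exp_le q3
        by (subst ln_le_cancel_iff) auto
      then show ?thesis by simp
    qed
    have "c0 / ln (real q) \<le> c0 / 1"
      by (rule divide_left_mono) (use assms lnq in auto)
    then have be1: "1 / 2 \<le> \<beta>" using b1 assms by simp
    show "J q a (real_of_int (chi a)) \<beta> X h \<le> ennreal 4400 * RHS q a (real_of_int (chi a)) \<beta> X h"
      by (rule main_bound) (use q X h b2 c be1 in auto)
  qed
  show ?thesis
    by (rule exI[of _ 4400]) (use key in auto)
qed


end
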